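(* Fix $\lambda>0$. For real $d\ge1$ let $\tilde x(d)$ be the unique positive solution of $d\,x=1+\lambda/(1+x)^d$ and $\nu(d)=\frac{d\tilde x(d)-1}{1+\tilde x(d)}$. Then the function $H(x)=\log\big(e^x\nu(e^x)\big)$ is concave on $[0,\infty)$.
   Context: Equivalently $\nu(d)=\sup_{x\ge0}\frac{dx}{1+x}\cdot\frac{f(x)}{1+f(x)}$ with $f(x)=\lambda/(1+x)^d$. *)

theory Defs
  imports "HOL-Analysis.Analysis"
begin

definition xtilde :: "real \<Rightarrow> real \<Rightarrow> real" where
  "xtilde lam d = (THE x. x > 0 \<and> d * x = 1 + lam / (1 + x) powr d)"

definition nu :: "real \<Rightarrow> real \<Rightarrow> real" where
  "nu lam d = (d * xtilde lam d - 1) / (1 + xtilde lam d)"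

definition Hfun :: "real \<Rightarrow> real \<Rightarrow> real" where
  "Hfun lam x = ln (exp x * nu lam (exp x))"

end

theory Submission
  imports Defs
begin

definition Af :: "real \<Rightarrow> real" where "Af u = ln (exp (exp u) - 1) - exp u"
definition Ad :: "real \<Rightarrow> real" where "Ad u = exp u / (exp (exp u) - 1)"
definition Kf :: "real \<Rightarrow> real \<Rightarrow> real" where "Kf lam s = ln (lam + exp (exp s))"
definition Kd :: "real \<Rightarrow> real \<Rightarrow> real" where
  "Kd lam s = exp s * (exp (exp s) / (lam + exp (exp s)))"

lemma expexp_gt1: "exp (exp (u::real)) > 1"
  by simp

lemma Af_deriv: "(Af has_real_derivative Ad u) (at u)"
proof -
  have "((\<lambda>u. ln (exp (exp u) - 1) - exp u) has_real_derivative
     (exp (exp u) * exp u) / (exp (exp u) - 1) - exp u) (at u)"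
    using expexp_gt1[of u]
    by (auto intro!: derivative_eq_intros)
  moreover have "(exp (exp u) * exp u) / (exp (exp u) - 1) - exp u = Ad u"
    using expexp_gt1[of u] by (simp add: Ad_def field_simps)
  ultimately show ?thesis unfolding Af_def by simp
qed

lemma ratio_dec:
  fixes w1 w2 :: real
  assumes "0 < w1" "w1 \<le> w2"
  shows "w2 / (exp w2 - 1) \<le> w1 / (exp w1 - 1)"
proof -
  have w2: "w2 > 0" using assms by simp
  have "exp ((1 - w1/w2) *\<^sub>R 0 + (w1/w2) *\<^sub>R w2) \<le> (1 - w1/w2) * exp 0 + (w1/w2) * exp w2"
    by (rule convex_onD[OF exp_convex]) (use assms w2 in auto)
  then have "exp w1 \<le> (1 - w1/w2) + (w1/w2) * exp w2" using w2 by simp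
  then have "w2 * exp w1 \<le> w2 * ((1 - w1/w2) + (w1/w2) * exp w2)"
    using w2 by (intro mult_left_mono) auto
  also have "\<dots> = w2 - w1 + w1 * exp w2" using w2 by (simp add: field_simps)
  finally have "w2 * exp w1 \<le> w2 - w1 + w1 * exp w2" .
  moreover have "exp w1 - 1 > 0" "exp w2 - 1 > 0" using assms w2 by auto
  ultimately show ?thesis by (simp add: divide_simps algebra_simps)
qed

lemma Ad_anti: "(u::real) \<le> v \<Longrightarrow> Ad v \<le> Ad u"
  unfolding Ad_def by (rule ratio_dec) auto

lemma Af_concave: "concave_on UNIV Af"
  unfolding concave_on_def
  by (rule convex_on_realI[where f'="\<lambda>u. - Ad u"])
     (auto intro!: derivative_eq_intros Af_deriv Ad_anti)

lemma Kf_deriv: assumes "lam > 0" shows "(Kf lam has_real_derivative Kd lam s) (at s)"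
proof -
  have "((\<lambda>s. ln (lam + exp (exp s))) has_real_derivative
     (exp (exp s) * exp s) / (lam + exp (exp s))) (at s)"
    using assms by (auto intro!: derivative_eq_intros simp: add_pos_pos)
  then show ?thesis unfolding Kf_def Kd_def by (simp add: field_simps)
qed

lemma Kd_mono: assumes "lam > 0" "(s::real) \<le> t" shows "Kd lam s \<le> Kd lam t"
proof -
  have e: "exp (exp s) \<le> exp (exp t)" using assms by simp
  have "exp (exp s) / (lam + exp (exp s)) \<le> exp (exp t) / (lam + exp (exp t))"
    using e assms by (simp add: divide_simps add_pos_pos) (simp add: algebra_simps mult_left_mono)
  moreover have "exp s \<le> exp t" using assms by simp
  ultimately show ?thesis unfolding Kd_def
    using assms by (intro mult_mono) (auto simp: add_pos_pos)
qed

lemma Kf_convex: assumes "lam > 0" shows "convex_on UNIV (Kf lam)"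
  by (rule convex_on_realI[where f'="Kd lam"]) (auto intro!: Kf_deriv Kd_mono assms)

lemma xtilde_prop:
  assumes lam: "lam > 0" and d: "d > 0"
  shows "xtilde lam d > 0 \<and> d * xtilde lam d = 1 + lam / (1 + xtilde lam d) powr d"
proof -
  define p where "p = (\<lambda>x::real. d * x - 1 - lam / (1 + x) powr d)"
  define X where "X = (2 + lam) / d"
  have X: "X > 0" using lam d by (simp add: X_def)
  have p0: "p 0 < 0" using lam by (simp add: p_def)
  have "(1 + X) powr d \<ge> 1" using X d by (simp add: ge_one_powr_ge_zero)
  then have "lam / (1 + X) powr d \<le> lam" using lam
    by (simp add: divide_simps)
  then have pX: "p X \<ge> 0" using d by (simp add: p_def X_def)
  have cont: "continuous_on {0..X} p"
    unfolding p_def by (auto intro!: continuous_intros)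
  obtain x where x: "0 \<le> x" "x \<le> X" "p x = 0"
    using IVT'[of p 0 0 X, OF _ pX _ cont] p0 X by auto
  have xpos: "x > 0" using x p0 by (cases "x = 0") auto
  have ex: "x > 0 \<and> d * x = 1 + lam / (1 + x) powr d" using xpos x(3) by (simp add: p_def)
  have uniq: "y = x" if y: "y > 0 \<and> d * y = 1 + lam / (1 + y) powr d" for y
  proof (rule ccontr)
    assume "y \<noteq> x"
    then consider "y < x" | "x < y" by linarith
    then show False
    proof cases
      case 1
      have "(1 + y) powr d \<le> (1 + x) powr d" using 1 y d by (intro powr_mono2) auto
      then have "lam / (1 + x) powr d \<le> lam / (1 + y) powr d" using lam y xpos
        by (intro divide_left_mono) auto
      moreover have "d * y < d * x" using 1 d by simp
      ultimately show False using ex y by linarith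
    next
      case 2
      have "(1 + x) powr d \<le> (1 + y) powr d" using 2 xpos d by (intro powr_mono2) auto
      then have "lam / (1 + y) powr d \<le> lam / (1 + x) powr d" using lam xpos y
        by (intro divide_left_mono) auto
      moreover have "d * x < d * y" using 2 d by simp
      ultimately show False using ex y by linarith
    qed
  qed
  have "\<exists>!x. x > 0 \<and> d * x = 1 + lam / (1 + x) powr d"
    using ex uniq by blast
  then show ?thesis unfolding xtilde_def by (rule theI')
qed

definition Gf :: "real \<Rightarrow> real \<Rightarrow> real \<Rightarrow> real" where
  "Gf lam t u = 2 * t + ln lam + Af u - Kf lam (t + u)"

lemma G_facts:
  assumes lam: "lam > 0"
  shows "Gf lam t v \<le> Hfun lam t \<and> (\<exists>u. Gf lam t u = Hfun lam t)"
proof -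
  define d where "d = exp t"
  define x where "x = xtilde lam d"
  have d: "d > 0" by (simp add: d_def)
  from xtilde_prop[OF lam d] have x: "x > 0" and eq: "d * x = 1 + lam / (1 + x) powr d"
    by (auto simp: x_def)
  define L where "L = ln (1 + x)"
  have L: "L > 0" using x by (simp add: L_def)
  define P where "P = exp (d * L)"
  have P: "P > 0" by (simp add: P_def)
  have powr: "(1 + x) powr d = P" using x by (simp add: P_def L_def powr_def mult.commute)
  define u where "u = ln L"
  have eu: "exp u = L" using L by (simp add: u_def)
  have eeu: "exp (exp u) = 1 + x" using x by (simp add: eu L_def)
  have etu: "exp (t + u) = d * L" by (simp add: exp_add eu d_def)
  have eetu: "exp (exp (t + u)) = P" by (simp add: etu P_def)
  have eq2: "d * x - 1 = lam / P" using eq powr by simp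
  have lamP: "lam + P = P * d * x" using eq2 P by (simp add: field_simps)
  have Hval: "Hfun lam t = ln (exp t * ((d * x - 1) / (1 + x)))"
    by (simp add: Hfun_def nu_def d_def x_def)
  have "Hfun lam t = t + ln lam - d * L - L"
    unfolding Hval eq2 using lam P x
    by (simp add: ln_mult ln_div L_def P_def)
  moreover have "Gf lam t u = 2 * t + ln lam + (ln x - L) - (d * L + t + ln x)"
    unfolding Gf_def Af_def Kf_def eeu eetu lamP using P d x eu
    by (simp add: ln_mult P_def d_def)
  ultimately have Geq: "Gf lam t u = Hfun lam t" by simp
  define F where "F = (\<lambda>v. - Gf lam t v)"
  have Fd: "(F has_real_derivative (Kd lam (t + v) - Ad v)) (at v)" for v
  proof -
    have "((\<lambda>v. Kf lam (t + v)) has_real_derivative Kd lam (t + v) * 1) (at v)"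
      by (rule DERIV_chain2[OF Kf_deriv[OF lam]]) (auto intro!: derivative_eq_intros)
    then show ?thesis unfolding F_def Gf_def
      by (auto intro!: derivative_eq_intros Af_deriv)
  qed
  have Fc: "convex_on UNIV F"
    by (rule convex_on_realI[OF _ Fd]) (auto intro!: diff_mono Kd_mono lam Ad_anti)
  have "Kd lam (t + u) = d * L * (P / (lam + P))" by (simp add: Kd_def etu P_def)
  also have "\<dots> = L / x" unfolding lamP using P d x L by (simp add: field_simps)
  also have "\<dots> = Ad u" using eu eeu by (simp add: Ad_def)
  finally have d0: "Kd lam (t + u) - Ad u = 0" by simp
  have "F v - F u \<ge> 0 * (v - u)"
    by (rule convex_on_imp_above_tangent[OF Fc]) (use Fd[of u] d0 in auto)
  then have "Gf lam t v \<le> Gf lam t u" by (simp add: F_def)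
  with Geq show ?thesis by auto
qed

theorem lemma5p2:
  fixes lam :: real
  assumes "lam > 0"
  shows "concave_on {0..} (Hfun lam)"
  unfolding concave_on_iff
proof (intro conjI ballI allI impI)
  show "convex {0::real..}" by simp
  fix x y :: real and a b :: real
  assume xy: "x \<in> {0..}" "y \<in> {0..}" and ab: "a \<ge> 0" "b \<ge> 0" "a + b = 1"
  obtain u1 where u1: "Gf lam x u1 = Hfun lam x" using G_facts[OF assms] by blast
  obtain u2 where u2: "Gf lam y u2 = Hfun lam y" using G_facts[OF assms] by blast
  have A: "Af (a * u1 + b * u2) \<ge> a * Af u1 + b * Af u2"
    using concave_onD[OF Af_concave, of b u1 u2] ab by (simp add: eq_diff_eq[symmetric])
  have K: "Kf lam (a * (x + u1) + b * (y + u2)) \<le> a * Kf lam (x + u1) + b * Kf lam (y + u2)"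
    using convex_onD[OF Kf_convex[OF assms], of b "x + u1" "y + u2"] ab
    by (simp add: eq_diff_eq[symmetric])
  have "a * Hfun lam x + b * Hfun lam y = a * Gf lam x u1 + b * Gf lam y u2" using u1 u2 by simp
  also have "\<dots> \<le> Gf lam (a * x + b * y) (a * u1 + b * u2)"
  proof -
    have e: "a * (x + u1) + b * (y + u2) = (a * x + b * y) + (a * u1 + b * u2)"
      by (simp add: algebra_simps)
    have "a * ln lam + b * ln lam = ln lam" using ab
      by (metis distrib_right mult_1)
    then show ?thesis unfolding Gf_def using A K e ab
      by (simp add: algebra_simps)
  qed
  also have "\<dots> \<le> Hfun lam (a * x + b * y)" using G_facts[OF assms] by blast
  finally show "a * Hfun lam x + b * Hfun lam y \<le> Hfun lam (a *\<^sub>R x + b *\<^sub>R y)" by simp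
qed

end
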